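(* Let $R$ be a unital associative ring and $$A=\begin{pmatrix}1&1&1\\1&a&b\\1&c&d\end{pmatrix}\in\widehat{\cal S},\qquad \Psi(A)=\begin{pmatrix}1&1&1\\1&a^+&b^+\\1&c^+&d^+\end{pmatrix}.$$ Then $$a^+=(d-c)^{-1}(db^{-1}-ca^{-1})(db^{-1}-1)^{-1}(d-1).$$
   Context: $R^*$: units of $R$. $M_3^*(R)$: invertible $3\times3$ matrices; $M_3^\star(R)$: matrices with all entries in $R^*$. $J_1(M)=M^{-1}$; $J_2(M)_{jk}=(M_{kj})^{-1}$; $J=J_2\circ J_1$. $\widehat M_3(R)$: matrices whose first row and column consist of $1$'s. For $A=\{a_{j,k}\}\in M_3^\star(R)$: $\Lambda^L(A)_{j,k}=a_{1,1}a_{j,1}^{-1}a_{j,k}a_{1,k}^{-1}$. $\Phi(A)=J_2(\Lambda^L(A^{-1}))$ and $\Psi=J_2\circ\Phi\circ J_2$. ${\cal S}=\{M\in M_3(R):$ all square submatrices of $M$ are invertible and $J_2(M)$ is invertible$\}$, $\widehat{\cal S}={\cal S}\cap\widehat M_3(R)$. *)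

theory Defs
  imports "HOL-Analysis.Analysis"
begin

text \<open>Matrices in M_3(R) are rendered as 'a^3^3; row/column indices 1,2,3 of the
paper are the numerals 1, 2, 3 of type 3 (where 3 = 0, but the three are distinct).\<close>

definition is_unit_r :: "'a::ring_1 \<Rightarrow> bool" where
  "is_unit_r x \<longleftrightarrow> (\<exists>y. x * y = 1 \<and> y * x = 1)"

definition uinv :: "'a::ring_1 \<Rightarrow> 'a" where
  "uinv x = (SOME y. x * y = 1 \<and> y * x = 1)"

definition J1 :: "'a::ring_1^3^3 \<Rightarrow> 'a^3^3" where
  "J1 M = matrix_inv M"

definition J2 :: "'a::ring_1^3^3 \<Rightarrow> 'a^3^3" where
  "J2 M = (\<chi> j k. uinv (M $ k $ j))"

definition LambdaL :: "'a::ring_1^3^3 \<Rightarrow> 'a^3^3" where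
  "LambdaL A = (\<chi> j k. A $ 1 $ 1 * uinv (A $ j $ 1) * A $ j $ k * uinv (A $ 1 $ k))"

definition Phi :: "'a::ring_1^3^3 \<Rightarrow> 'a^3^3" where
  "Phi A = J2 (LambdaL (matrix_inv A))"

definition Psi :: "'a::ring_1^3^3 \<Rightarrow> 'a^3^3" where
  "Psi A = J2 (Phi (J2 A))"

definition submatrix_invertible :: "'a::ring_1^3^3 \<Rightarrow> 3 set \<Rightarrow> 3 set \<Rightarrow> bool" where
  "submatrix_invertible M I K \<longleftrightarrow>
     (\<exists>N :: 3 \<Rightarrow> 3 \<Rightarrow> 'a.
        (\<forall>i\<in>I. \<forall>i'\<in>I. (\<Sum>k\<in>K. M $ i $ k * N k i') = (if i = i' then 1 else 0)) \<and>
        (\<forall>k\<in>K. \<forall>k'\<in>K. (\<Sum>i\<in>I. N k i * M $ i $ k') = (if k = k' then 1 else 0)))"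

definition S_set :: "('a::ring_1^3^3) set" where
  "S_set = {M. (\<forall>I K. I \<noteq> {} \<and> card I = card K \<longrightarrow> submatrix_invertible M I K)
               \<and> invertible (J2 M)}"

definition hatM3 :: "('a::ring_1^3^3) set" where
  "hatM3 = {M. \<forall>j. M $ 1 $ j = 1 \<and> M $ j $ 1 = 1}"

definition hatS_set :: "('a::ring_1^3^3) set" where
  "hatS_set = S_set \<inter> hatM3"

end

theory Submission imports Defs begin
lemma unit_inv: "is_unit_r x \<Longrightarrow> x * uinv x = 1 \<and> uinv x * x = 1"
  unfolding is_unit_r_def uinv_def by (rule someI_ex)

lemma unit_I: "x * y = (1::'a::ring_1) \<Longrightarrow> z * x = 1 \<Longrightarrow> is_unit_r x"
proof -
  assume h: "x * y = 1" "z * x = 1"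
  have "z = y" by (metis h mult.assoc mult_1_left mult_1_right)
  thus ?thesis using h unfolding is_unit_r_def by blast
qed

lemma uinv_eq: "x * y = (1::'a::ring_1) \<Longrightarrow> y * x = 1 \<Longrightarrow> uinv x = y"
  by (metis is_unit_r_def unit_inv mult.assoc mult_1_left mult_1_right)

lemma unit_mult: "is_unit_r (x::'a::ring_1) \<Longrightarrow> is_unit_r y \<Longrightarrow> is_unit_r (x * y)"
  unfolding is_unit_r_def
  by (metis mult.assoc mult_1_left)

lemma uinv_mult: "is_unit_r (x::'a::ring_1) \<Longrightarrow> is_unit_r y \<Longrightarrow> uinv (x * y) = uinv y * uinv x"
  apply (rule uinv_eq)
  by (metis (no_types, lifting) unit_inv mult.assoc mult_1_left)+

lemma unit_uinv: "is_unit_r (x::'a::ring_1) \<Longrightarrow> is_unit_r (uinv x) \<and> uinv (uinv x) = x"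
  by (meson is_unit_r_def unit_inv uinv_eq)

lemma unit_neg: "is_unit_r (x::'a::ring_1) \<Longrightarrow> is_unit_r (- x)"
  unfolding is_unit_r_def by (metis minus_mult_minus)

lemma uinv_one: "uinv (1::'a::ring_1) = 1"
  by (rule uinv_eq) simp_all

lemma unit_one: "is_unit_r (1::'a::ring_1)"
  unfolding is_unit_r_def by auto

lemma cancel_l: "u * ui = (1::'a::ring_1) \<Longrightarrow> ui * u = 1 \<Longrightarrow> u * x = y \<Longrightarrow> x = ui * y"
  by (metis mult.assoc mult_1_left)
lemma cancel_r: "u * ui = (1::'a::ring_1) \<Longrightarrow> ui * u = 1 \<Longrightarrow> x * u = y \<Longrightarrow> x = y * ui"
  by (metis mult.assoc mult_1_right)

lemma core:
  fixes a b c d ai bi ci di x11 x12 xt x21 x22 xu xv xw :: "'a::ring_1"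
  assumes ia: "a*ai=1" "ai*a=1" and ib: "b*bi=1" "bi*b=1"
    and ic: "c*ci=1" "ci*c=1" and id: "d*di=1" "di*d=1"
    and udc: "is_unit_r (d-c)" and ud1: "is_unit_r (d-1)" and udb: "is_unit_r (d-b)"
    and us: "is_unit_r (d - c*ai*b)"
    and E11: "x11+x21+xv=1" and E21: "x11 + ai*x21 + ci*xv = 0" and E31: "x11 + bi*x21 + di*xv = 0"
    and E12: "x12+x22+xw=0" and E22: "x12 + ai*x22 + ci*xw = 1" and E32: "x12 + bi*x22 + di*xw = 0"
    and F11: "x11+x12+xt=1" and F12: "x11 + x12*ai + xt*bi = 0" and F13: "x11 + x12*ci + xt*di = 0"
    and F21: "x21+x22+xu=0" and F22: "x21 + x22*ai + xu*bi = 1" and F23: "x21 + x22*ci + xu*di = 0"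
  shows "uinv (uinv (x11 * uinv x21 * x22 * uinv x12)) =
         uinv (d - c) * (d * bi - c * ai) * uinv (d * bi - 1) * (d - 1)"
proof -
  have uai: "is_unit_r ai" "is_unit_r bi" "is_unit_r ci" "is_unit_r di"
    using ia ib ic id unfolding is_unit_r_def by auto
  have e1: "di - ci = di*(-(d-c))*ci" using ic id by (simp add: algebra_simps)
  have "is_unit_r (di - ci)" unfolding e1 using uai udc by (intro unit_mult unit_neg)
  then obtain u1i where u1: "(di-ci)*u1i = 1" "u1i*(di-ci) = 1" unfolding is_unit_r_def by blast
  have e2: "di - bi = di*(-(d-b))*bi" using ib id by (simp add: algebra_simps)
  have "is_unit_r (di - bi)" unfolding e2 using uai udb by (intro unit_mult unit_neg)
  then obtain u2i where u2: "(di-bi)*u2i = 1" "u2i*(di-bi) = 1" unfolding is_unit_r_def by blast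
  have e3: "di - 1 = di*(-(d-1))" using id by (simp add: algebra_simps)
  have "is_unit_r (di - 1)" unfolding e3 using uai ud1 by (intro unit_mult unit_neg)
  then obtain u3i where u3: "(di-1)*u3i = 1" "u3i*(di-1) = 1" unfolding is_unit_r_def by blast
  have "(di-ci)*xv - (ai-bi)*x21 = (x11 + bi*x21 + di*xv) - (x11 + ai*x21 + ci*xv)"
    by (simp add: algebra_simps)
  hence "(di-ci)*xv = (ai-bi)*x21" using E21 E31 by simp
  hence xv: "xv = u1i*(ai-bi)*x21" using u1 cancel_l by (metis mult.assoc)
  have x11: "x11 = -(bi*x21) - di*xv" using E31 by (simp add: algebra_simps eq_neg_iff_add_eq_0)
  have L21: "(1 - bi - di*u1i*(ai-bi) + u1i*(ai-bi)) * x21 = 1"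
    using E11 unfolding x11 xv by (simp add: algebra_simps)
  have x22a: "x22 = -x21 - xu" using F21 by (simp add: algebra_simps eq_neg_iff_add_eq_0)
  have "xu*(di-ci) - x21*(ci-1) = x21 + x22*ci + xu*di"
    unfolding x22a by (simp add: algebra_simps)
  hence "xu*(di-ci) = x21*(ci-1)" using F23 by simp
  hence xu: "xu = x21*(ci-1)*u1i" using u1 cancel_r by (metis mult.assoc)
  have R21: "x21 * ((1-ai) + (ci-1)*u1i*(bi-ai)) = 1"
    using F22 unfolding x22a xu by (simp add: algebra_simps)
  have u21: "is_unit_r x21" using L21 R21 unit_I by blast
  have q1: "x11 * uinv x21 = -(bi + di*u1i*(ai-bi))"
  proof -
    have "x11 = -(bi + di*u1i*(ai-bi)) * x21" unfolding x11 xv by (simp add: algebra_simps)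
    thus ?thesis using unit_inv[OF u21] by (metis mult.assoc mult_1_right)
  qed
  have "xt*(di-bi) - x12*(ai-ci) = (x11 + x12*ci + xt*di) - (x11 + x12*ai + xt*bi)"
    by (simp add: algebra_simps)
  hence "xt*(di-bi) = x12*(ai-ci)" using F12 F13 by simp
  hence xt: "xt = x12*(ai-ci)*u2i" using u2 cancel_r by (metis mult.assoc)
  have "x12 * ((1-ai) + (ai-ci)*u2i*(1-bi)) = (x11+x12+xt) - (x11 + x12*ai + xt*bi)"
    unfolding xt by (simp add: algebra_simps)
  hence R12: "x12 * ((1-ai) + (ai-ci)*u2i*(1-bi)) = 1" using F11 F12 by simp
  have "(di-1)*xw - (1-bi)*x22 = (x12 + bi*x22 + di*xw) - (x12+x22+xw)"
    by (simp add: algebra_simps)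
  hence "(di-1)*xw = (1-bi)*x22" using E12 E32 by simp
  hence xw: "xw = u3i*(1-bi)*x22" using u3 cancel_l by (metis mult.assoc)
  have x12a: "x12 = -x22 - xw" using E12 by (simp add: algebra_simps eq_neg_iff_add_eq_0)
  have "u3i*(di-bi) = u3i*(di-1) + u3i*(1-bi)" by (simp add: algebra_simps)
  hence w: "u3i*(di-bi) = 1 + u3i*(1-bi)" using u3 by simp
  have "x12 = -(1 + u3i*(1-bi))*x22" unfolding x12a xw by (simp add: algebra_simps)
  hence "x12 = -(u3i*(di-bi))*x22" using w by simp
  hence "(-((di-1)*x12)) = (di-bi)*x22" using u3 by (simp add: mult.assoc[symmetric])
  hence x22: "x22 = u2i*(-(di-1))*x12" using u2 cancel_l by (metis mult.assoc mult_minus_left)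
  have "((ai-1) + (ci-1)*u3i*(1-bi))*x22 = (x12 + ai*x22 + ci*xw) - (x12+x22+xw)"
    unfolding xw by (simp add: algebra_simps)
  hence "((ai-1) + (ci-1)*u3i*(1-bi))*x22 = 1" using E12 E22 by simp
  hence L12: "(((ai-1) + (ci-1)*u3i*(1-bi)) * (u2i*(-(di-1)))) * x12 = 1"
    unfolding x22 by (simp add: mult.assoc)
  have u12: "is_unit_r x12" using L12 R12 unit_I by blast
  define Y where "Y = bi + di*u3i*(1-bi)"
  have x12b: "x12 = -(Y*x22)" unfolding Y_def using E32 unfolding xw
    by (simp add: algebra_simps eq_neg_iff_add_eq_0)
  have z: "Y * (x22 * uinv x12) = -1"
    using unit_inv[OF u12] x12b by (metis mult.assoc minus_equation_iff mult_minus_left)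
  have h1: "(d-1)*di = -(di-1)" using id by (simp add: algebra_simps)
  have "(d-1)*Y = (d-1)*bi + ((d-1)*di)*(u3i*(1-bi))" unfolding Y_def
    by (simp add: distrib_left mult.assoc)
  also have "... = (d-1)*bi - ((di-1)*u3i)*(1-bi)" unfolding h1 by (simp only: mult.assoc mult_minus_left diff_conv_add_uminus)
  also have "... = d*bi - 1" unfolding u3 by (simp add: algebra_simps)
  finally have "(d-1)*Y = d*bi - 1" .
  hence Yeq: "Y = uinv(d-1)*(d*bi - 1)" using unit_inv[OF ud1] cancel_l by blast
  have hdb: "d*bi - 1 = (d-b)*bi" using ib by (simp add: algebra_simps)
  have udb1: "is_unit_r (d*bi - 1)" unfolding hdb using udb uai by (intro unit_mult)
  have uY: "is_unit_r Y" unfolding Yeq using udb1 ud1 unit_uinv unit_mult by blast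
  have z2: "x22 * uinv x12 = -(uinv Y)"
  proof -
    have "uinv Y * (Y * (x22 * uinv x12)) = -(uinv Y)" using z by simp
    thus ?thesis using unit_inv[OF uY] by (simp add: mult.assoc[symmetric])
  qed
  have uiY: "uinv Y = uinv (d*bi - 1) * (d-1)"
    unfolding Yeq using uinv_mult[of "uinv (d-1)" "d*bi-1"] ud1 udb1 unit_uinv by metis
  define X where "X = bi + di*u1i*(ai-bi)"
  have h2: "(d-c)*di = -(c*(di-ci))" using ic id by (simp add: algebra_simps)
  have "(d-c)*X = (d-c)*bi + ((d-c)*di)*(u1i*(ai-bi))" unfolding X_def
    by (simp add: distrib_left mult.assoc)
  also have "... = (d-c)*bi - c*((di-ci)*u1i)*(ai-bi)" unfolding h2 by (simp only: mult.assoc mult_minus_left diff_conv_add_uminus)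
  also have "... = d*bi - c*ai" unfolding u1 by (simp add: algebra_simps)
  finally have "(d-c)*X = d*bi - c*ai" .
  hence Xeq: "X = uinv(d-c)*(d*bi - c*ai)" using unit_inv[OF udc] cancel_l by blast
  have hs: "d*bi - c*ai = (d - c*ai*b)*bi" using ib by (simp add: algebra_simps mult.assoc)
  have uds: "is_unit_r (d*bi - c*ai)" unfolding hs using us uai by (intro unit_mult)
  have main: "x11 * uinv x21 * x22 * uinv x12 = uinv (d - c) * (d * bi - c * ai) * uinv (d * bi - 1) * (d - 1)"
  proof -
    have "x11 * uinv x21 * x22 * uinv x12 = (-X) * (-(uinv Y))"
      using q1 z2 unfolding X_def by (simp add: mult.assoc)
    also have "... = X * uinv Y" by simp
    finally show ?thesis unfolding Xeq uiY by (simp add: mult.assoc)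
  qed
  have "is_unit_r (uinv (d - c) * (d * bi - c * ai) * uinv (d * bi - 1) * (d - 1))"
    using udc uds udb1 ud1 unit_uinv unit_mult by metis
  thus ?thesis unfolding main using unit_uinv by blast
qed

lemma unit11: "submatrix_invertible M {i} {k} \<Longrightarrow> is_unit_r (M$i$k)"
  unfolding submatrix_invertible_def is_unit_r_def by auto

lemma schur2:
  fixes M :: "'a::ring_1^3^3"
  assumes "i1 \<noteq> i2" "k1 \<noteq> k2" "submatrix_invertible M {i1,i2} {k1,k2}" "is_unit_r (M$i1$k1)"
  shows "is_unit_r (M$i2$k2 - M$i2$k1 * uinv(M$i1$k1) * M$i1$k2)"
proof -
  obtain N where N1: "\<forall>i\<in>{i1,i2}. \<forall>i'\<in>{i1,i2}. (\<Sum>k\<in>{k1,k2}. M $ i $ k * N k i') = (if i = i' then 1 else 0)"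
    and N2: "\<forall>k\<in>{k1,k2}. \<forall>k'\<in>{k1,k2}. (\<Sum>i\<in>{i1,i2}. N k i * M $ i $ k') = (if k = k' then 1 else 0)"
    using assms(3) unfolding submatrix_invertible_def by blast
  define p where "p = M$i1$k1" define q where "q = M$i1$k2"
  define r where "r = M$i2$k1" define s where "s = M$i2$k2"
  define pi where "pi = uinv p"
  have ip: "p*pi = 1" "pi*p = 1" using unit_inv assms(4) unfolding pi_def p_def by auto
  have a1: "p * N k1 i2 + q * N k2 i2 = 0" using N1 assms(1,2) unfolding p_def q_def by auto
  have a2: "r * N k1 i2 + s * N k2 i2 = 1" using N1 assms(1,2) unfolding r_def s_def by auto
  have b1: "N k2 i1 * p + N k2 i2 * r = 0" using N2 assms(1,2) unfolding p_def r_def by auto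
  have b2: "N k2 i1 * q + N k2 i2 * s = 1" using N2 assms(1,2) unfolding q_def s_def by auto
  have "p * N k1 i2 = - (q * N k2 i2)" using a1 by (simp add: eq_neg_iff_add_eq_0)
  hence n1: "N k1 i2 = - (pi * q * N k2 i2)" using ip by (metis cancel_l mult.assoc mult_minus_right)
  have L: "(s - r*pi*q) * N k2 i2 = 1" using a2 unfolding n1 by (simp add: algebra_simps)
  have "N k2 i1 * p = - (N k2 i2 * r)" using b1 by (simp add: eq_neg_iff_add_eq_0)
  hence n2: "N k2 i1 = - (N k2 i2 * r * pi)" using ip by (metis cancel_r mult.assoc mult_minus_left)
  have R: "N k2 i2 * (s - r*pi*q) = 1" using b2 unfolding n2 by (simp add: algebra_simps)
  show ?thesis using unit_I[OF L R] unfolding s_def r_def pi_def p_def q_def .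
qed

theorem lemma13:
  fixes A :: "'a::ring_1^3^3" and a b c d :: 'a
  assumes "A = vector [vector [1, 1, 1], vector [1, a, b], vector [1, c, d]]"
    and "A \<in> hatS_set"
  shows "Psi A $ 2 $ 2 =
         uinv (d - c) * (d * uinv b - c * uinv a) * uinv (d * uinv b - 1) * (d - 1)"
proof -
  have SI: "\<And>I K. I \<noteq> {} \<Longrightarrow> card I = card K \<Longrightarrow> submatrix_invertible A I K"
    and invB: "invertible (J2 A)"
    using assms(2) unfolding hatS_set_def S_set_def by auto
  have Ae: "A$1$1 = 1" "A$1$2 = 1" "A$1$3 = 1" "A$2$1 = 1" "A$2$2 = a" "A$2$3 = b"
     "A$3$1 = 1" "A$3$2 = c" "A$3$3 = d" using assms(1) by simp_all
  have ne: "(1::3) \<noteq> 2" "(1::3) \<noteq> 3" "(2::3) \<noteq> 3" by simp_all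
  have c1: "\<And>i k::3. card {i} = card {k}" by simp
  have c2: "card {1,3::3} = 2" "card {1,2::3} = 2" "card {2,3::3} = 2" by simp_all
  have ua: "is_unit_r a" using unit11[OF SI[OF _ c1, of 2 2]] Ae by simp
  have ub: "is_unit_r b" using unit11[OF SI[OF _ c1, of 2 3]] Ae by simp
  have uc: "is_unit_r c" using unit11[OF SI[OF _ c1, of 3 2]] Ae by simp
  have ud: "is_unit_r d" using unit11[OF SI[OF _ c1, of 3 3]] Ae by simp
  have u1: "is_unit_r (1::'a)" by (rule unit_one)
  have udc: "is_unit_r (d - c)"
    using schur2[OF ne(2) ne(3) SI] c2 Ae u1 by (simp add: uinv_one)
  have ud1: "is_unit_r (d - 1)"
    using schur2[OF ne(2) ne(2) SI] c2 Ae u1 by (simp add: uinv_one)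
  have udb: "is_unit_r (d - b)"
    using schur2[OF ne(3) ne(2) SI] c2 Ae u1 by (simp add: uinv_one)
  have us: "is_unit_r (d - c * uinv a * b)"
    using schur2[OF ne(3) ne(3) SI] c2 Ae ua by simp
  define B where "B = J2 A"
  define C where "C = matrix_inv B"
  have BC: "B ** C = mat 1" "C ** B = mat 1"
    using invB someI_ex[of "\<lambda>A'. B ** A' = mat 1 \<and> A' ** B = mat 1"]
    unfolding C_def matrix_inv_def invertible_def B_def by auto
  have Be: "B$1$1 = 1" "B$1$2 = 1" "B$1$3 = 1" "B$2$1 = 1" "B$2$2 = uinv a" "B$2$3 = uinv c"
     "B$3$1 = 1" "B$3$2 = uinv b" "B$3$3 = uinv d" unfolding B_def J2_def using Ae uinv_one by simp_all
  have P: "\<And>i j. (\<Sum>k\<in>UNIV. B$i$k * C$k$j) = (if i = j then 1 else 0)"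
  proof -
    fix i j have "(B ** C)$i$j = mat 1 $i$j" using BC(1) by simp
    thus "(\<Sum>k\<in>UNIV. B$i$k * C$k$j) = (if i = j then 1 else 0)" by (simp add: matrix_matrix_mult_def mat_def)
  qed
  have Q: "\<And>i j. (\<Sum>k\<in>UNIV. C$i$k * B$k$j) = (if i = j then 1 else 0)"
  proof -
    fix i j have "(C ** B)$i$j = mat 1 $i$j" using BC(2) by simp
    thus "(\<Sum>k\<in>UNIV. C$i$k * B$k$j) = (if i = j then 1 else 0)" by (simp add: matrix_matrix_mult_def mat_def)
  qed
  note P' = P[unfolded sum_3] and Q' = Q[unfolded sum_3]
  have ia: "a * uinv a = 1" "uinv a * a = 1" using unit_inv[OF ua] by auto
  have ib: "b * uinv b = 1" "uinv b * b = 1" using unit_inv[OF ub] by auto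
  have ic: "c * uinv c = 1" "uinv c * c = 1" using unit_inv[OF uc] by auto
  have id: "d * uinv d = 1" "uinv d * d = 1" using unit_inv[OF ud] by auto
  have core': "uinv (uinv (C$1$1 * uinv (C$2$1) * C$2$2 * uinv (C$1$2))) =
         uinv (d - c) * (d * uinv b - c * uinv a) * uinv (d * uinv b - 1) * (d - 1)"
    apply (rule core[where xt="C$1$3" and xu="C$2$3" and xv="C$3$1" and xw="C$3$2", OF ia ib ic id udc ud1 udb us])
    using P'[of 1 1] P'[of 2 1] P'[of 3 1] P'[of 1 2] P'[of 2 2] P'[of 3 2]
      Q'[of 1 1] Q'[of 1 2] Q'[of 1 3] Q'[of 2 1] Q'[of 2 2] Q'[of 2 3] ne
    by (simp_all add: ne Be)
  show ?thesis unfolding Psi_def Phi_def LambdaL_def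
    using core' unfolding B_def C_def by (simp add: J2_def)
qed

end
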